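(* For every infinite discrete group $G$, the Bernoulli flow $2^G$ contains a free point whose orbit is dense.
   Context: The Bernoulli flow is $2^G=\{0,1\}^G$ with the product topology and the action $(g\cdot z)(h)=z(hg)$. A point $z$ is free if the map $g\mapsto g\cdot z$ is injective. *)

theory Defs
  imports "HOL-Algebra.Group" "HOL-Analysis.Function_Topology"
begin

text \<open>The Bernoulli flow 2^G: functions carrier G -> {0,1} (here bool), with the
  product of discrete topologies. Elements are extensional on carrier G.\<close>
definition bernoulli_space :: "('g, 'b) monoid_scheme \<Rightarrow> ('g \<Rightarrow> bool) topology" where
  "bernoulli_space G = product_topology (\<lambda>_. discrete_topology (UNIV :: bool set)) (carrier G)"

definition bernoulli_shift :: "('g, 'b) monoid_scheme \<Rightarrow> 'g \<Rightarrow> ('g \<Rightarrow> bool) \<Rightarrow> ('g \<Rightarrow> bool)" where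
  "bernoulli_shift G g z = (\<lambda>h\<in>carrier G. z (h \<otimes>\<^bsub>G\<^esub> g))"

definition free_point :: "('g, 'b) monoid_scheme \<Rightarrow> ('g \<Rightarrow> bool) \<Rightarrow> bool" where
  "free_point G z \<longleftrightarrow> inj_on (\<lambda>g. bernoulli_shift G g z) (carrier G)"

definition orbit :: "('g, 'b) monoid_scheme \<Rightarrow> ('g \<Rightarrow> bool) \<Rightarrow> ('g \<Rightarrow> bool) set" where
  "orbit G z = (\<lambda>g. bernoulli_shift G g z) ` carrier G"

end

theory Submission
  imports Defs
begin

unbundle cardinal_syntax

lemma fin_less: "finite A \<Longrightarrow> infinite B \<Longrightarrow> |A| <o |B|"
  using finite_ordLess_infinite[OF card_of_Well_order card_of_Well_order] by (simp add: Field_card_of)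

lemma union_fin_less:
  assumes "infinite C" "|A| <o |C|" "\<And>a. a \<in> A \<Longrightarrow> finite (S a)"
  shows "|\<Union>a\<in>A. S a| <o |C|"
proof (cases "finite A")
  case True then show ?thesis using assms fin_less by blast
next
  case False
  have "|\<Union>a\<in>A. S a| \<le>o |A|"
    using card_of_UNION_ordLeq_infinite[OF False ordLeq_refl[OF card_of_Card_order], of S]
      assms(3) fin_less[OF _ False] ordLess_imp_ordLeq by blast
  then show ?thesis using assms(2) ordLeq_ordLess_trans by blast
qed

lemma lists_card: assumes "infinite A" shows "|lists A| \<le>o |A|"
proof -
  have len: "|{xs\<in>lists A. length xs = n}| \<le>o |A|" for n
  proof (induction n)
    case 0
    have "{xs\<in>lists A. length xs = 0} = {[]}" by auto
    then show ?case using fin_less[of "{[]}" A] assms ordLess_imp_ordLeq by auto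
  next
    case (Suc n)
    have "{xs\<in>lists A. length xs = Suc n} = (\<lambda>(x,xs). x#xs) ` (A \<times> {xs\<in>lists A. length xs = n})"
      by (auto simp: length_Suc_conv)
    moreover have "|A \<times> {xs\<in>lists A. length xs = n}| \<le>o |A|"
      apply (rule card_of_Times_ordLeq_infinite_Field[of "|A|", unfolded Field_card_of])
      using assms Suc.IH ordLeq_refl[OF card_of_Card_order] card_of_Card_order by (auto simp: card_of_card_order_on)
    ultimately show ?case using card_of_image[of "\<lambda>(x,xs). x#xs" "A \<times> {xs\<in>lists A. length xs = n}"]
      ordLeq_transitive by auto
  qed
  have "lists A = (\<Union>n. {xs\<in>lists A. length xs = n})" by auto
  moreover have "|\<Union>n::nat. {xs\<in>lists A. length xs = n}| \<le>o |A|"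
    apply (rule card_of_UNION_ordLeq_infinite[OF assms])
    using assms len infinite_iff_card_of_nat by auto
  ultimately show ?thesis by simp
qed

lemma index_card:
  assumes "infinite C"
  shows "|lists (C \<times> (UNIV::bool set)) \<times> (UNIV::bool set)| \<le>o |C|"
proof -
  have b: "|UNIV::bool set| \<le>o |C|" by (rule ordLess_imp_ordLeq, rule fin_less) (simp_all add: assms)
  have "|C \<times> (UNIV::bool set)| =o |C|" using card_of_Times_infinite[OF assms _ b] by simp
  moreover have "infinite (C \<times> (UNIV::bool set))" using assms finite_cartesian_productD1[of C "UNIV::bool set"] by auto
  ultimately have "|lists (C \<times> (UNIV::bool set))| \<le>o |C|"
    using lists_card ordLeq_ordIso_trans by blast
  then show ?thesis
    apply (intro card_of_Times_ordLeq_infinite_Field[of "|C|", unfolded Field_card_of])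
    using assms b card_of_Card_order by (auto simp: card_of_card_order_on)
qed

definition Pl :: "('g, 'b) monoid_scheme \<Rightarrow> ('g \<times> bool) list \<times> bool \<Rightarrow> 'g \<Rightarrow> 'g set" where
  "Pl G q g = (if snd q then (\<lambda>h. h \<otimes>\<^bsub>G\<^esub> g) else (\<lambda>h. g \<otimes>\<^bsub>G\<^esub> h)) ` fst ` set (fst q)"

definition val :: "('g, 'b) monoid_scheme \<Rightarrow> ('g \<times> bool) list \<times> bool \<Rightarrow> 'g \<Rightarrow> 'g \<Rightarrow> bool" where
  "val G q g w = the (map_of (fst q) (if snd q then w \<otimes>\<^bsub>G\<^esub> inv\<^bsub>G\<^esub> g else inv\<^bsub>G\<^esub> g \<otimes>\<^bsub>G\<^esub> w))"

lemma (in group) avoid: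
  assumes inf: "infinite (carrier G)" and U: "|U| <o |carrier G|"
    and q: "set (fst q) \<subseteq> carrier G \<times> UNIV"
  shows "\<exists>g\<in>carrier G. Pl G q g \<inter> U = {}"
proof -
  let ?F = "fst ` set (fst q)"
  have F: "?F \<subseteq> carrier G" using q by force
  define Bad where "Bad = (\<Union>u\<in>U \<inter> carrier G. (\<lambda>f. if snd q then inv f \<otimes> u else u \<otimes> inv f) ` ?F)"
  have "|Bad| <o |carrier G|"
    unfolding Bad_def
    apply (rule union_fin_less[OF inf])
    using U card_of_mono1[of "U \<inter> carrier G" U] ordLeq_ordLess_trans by auto
  then have "\<not> carrier G \<subseteq> Bad"
    using card_of_mono1 not_ordLess_ordLeq by blast
  then obtain g where g: "g \<in> carrier G" "g \<notin> Bad" by blast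
  have "Pl G q g \<inter> U = {}"
  proof (rule ccontr)
    assume "Pl G q g \<inter> U \<noteq> {}"
    then obtain f u where fu: "f \<in> ?F" "u \<in> U" "u = (if snd q then f \<otimes> g else g \<otimes> f)"
      unfolding Pl_def by (auto split: if_splits)
    have fC: "f \<in> carrier G" using fu F by blast
    then have uC: "u \<in> carrier G" using fu g by auto
    have "g = (if snd q then inv f \<otimes> u else u \<otimes> inv f)"
      using fu fC g by (auto simp: m_assoc[symmetric] m_assoc)
    then have "g \<in> Bad" unfolding Bad_def using fu uC by blast
    then show False using g by blast
  qed
  then show ?thesis using g by blast
qed

lemma (in group) main:
  assumes "group G" and "infinite (carrier G)"
  shows "\<exists>z \<in> topspace (bernoulli_space G).
           free_point G z \<and>
           (bernoulli_space G) closure_of (orbit G z) = topspace (bernoulli_space G)"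
proof -
  let ?C = "carrier G"
  define I where "I = lists (?C \<times> (UNIV::bool set)) \<times> (UNIV::bool set)"
  have "I \<noteq> {}" unfolding I_def by auto
  then obtain \<sigma> where \<sigma>: "\<sigma> ` ?C = I"
    using card_of_ordLeq2[of I ?C] index_card[OF assms(2)] unfolding I_def by auto
  have \<sigma>I: "set (fst (\<sigma> x)) \<subseteq> ?C \<times> UNIV" if "x \<in> ?C" for x
  proof -
    have "\<sigma> x \<in> I" using \<sigma> that by blast
    then show ?thesis unfolding I_def by (auto simp: in_lists_conv_set)
  qed
  define r where "r = |?C|"
  have wor: "wo_rel r" unfolding r_def wo_rel_def by (rule card_of_Well_order)
  have wf: "wf (r - Id)" using wo_rel.WF[OF wor] .
  define H where "H = (\<lambda>f x. SOME g. g \<in> ?C \<and> Pl G (\<sigma> x) g \<inter> (\<Union>y\<in>underS r x. Pl G (\<sigma> y) (f y)) = {})"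
  define A where "A = wfrec (r - Id) H"
  define U where "U x = (\<Union>y\<in>underS r x. Pl G (\<sigma> y) (A y))" for x
  have Aeq: "A x = (SOME g. g \<in> ?C \<and> Pl G (\<sigma> x) g \<inter> U x = {})" for x
  proof -
    have "A x = H (cut A (r - Id) x) x" unfolding A_def by (rule wfrec[OF wf])
    moreover have "(\<Union>y\<in>underS r x. Pl G (\<sigma> y) (cut A (r - Id) x y)) = U x"
      unfolding U_def by (intro SUP_cong refl) (auto simp: cut_apply underS_def)
    ultimately show ?thesis unfolding H_def by simp
  qed
  have Aspec: "A x \<in> ?C \<and> Pl G (\<sigma> x) (A x) \<inter> U x = {}" if "x \<in> ?C" for x
  proof -
    have "|U x| <o |?C|" unfolding U_def
      apply (rule union_fin_less[OF assms(2)])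
      using card_of_underS[OF card_of_Card_order, of x ?C] that by (auto simp: r_def Field_card_of Pl_def)
    then have "\<exists>g\<in>?C. Pl G (\<sigma> x) g \<inter> U x = {}" by (rule avoid[OF assms(2)]) (rule \<sigma>I[OF that])
    then obtain g where "g \<in> ?C \<and> Pl G (\<sigma> x) g \<inter> U x = {}" by blast
    then show ?thesis unfolding Aeq by (rule someI)
  qed
  have disj: "Pl G (\<sigma> x) (A x) \<inter> Pl G (\<sigma> y) (A y) = {}" if "x \<in> ?C" "y \<in> ?C" "x \<noteq> y" for x y
  proof -
    have "(x,y) \<in> r \<or> (y,x) \<in> r" using wo_rel.TOTALS[OF wor] that by (auto simp: r_def Field_card_of)
    then show ?thesis
    proof
      assume "(x,y) \<in> r"
      then have "x \<in> underS r y" using that by (simp add: underS_def)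
      then have "Pl G (\<sigma> x) (A x) \<subseteq> U y" unfolding U_def by blast
      then show ?thesis using Aspec[OF that(2)] by blast
    next
      assume "(y,x) \<in> r"
      then have "y \<in> underS r x" using that by (simp add: underS_def)
      then have "Pl G (\<sigma> y) (A y) \<subseteq> U x" unfolding U_def by blast
      then show ?thesis using Aspec[OF that(1)] by blast
    qed
  qed
  define z where "z = (\<lambda>w\<in>?C. if \<exists>x\<in>?C. w \<in> Pl G (\<sigma> x) (A x)
     then (let x = SOME x. x \<in> ?C \<and> w \<in> Pl G (\<sigma> x) (A x) in val G (\<sigma> x) (A x) w) else False)"
  have zval: "z w = val G (\<sigma> x) (A x) w" if "x \<in> ?C" "w \<in> Pl G (\<sigma> x) (A x)" "w \<in> ?C" for x w
  proof -
    let ?x = "SOME x. x \<in> ?C \<and> w \<in> Pl G (\<sigma> x) (A x)"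
    have "?x \<in> ?C \<and> w \<in> Pl G (\<sigma> ?x) (A ?x)" by (rule someI[of _ x]) (use that in auto)
    then have "?x = x" using disj[of ?x x] that by blast
    moreover have "\<exists>x\<in>?C. w \<in> Pl G (\<sigma> x) (A x)" using that by blast
    ultimately show ?thesis unfolding z_def using that by (simp add: Let_def)
  qed
  have placeR: "val G q g (h \<otimes> g) = the (map_of (fst q) h)" if "snd q" "g\<in>?C" "h\<in>?C" for q g h
    using that by (simp add: val_def m_assoc)
  have placeL: "val G q g (g \<otimes> h) = the (map_of (fst q) h)" if "\<not> snd q" "g\<in>?C" "h\<in>?C" for q g h
    using that by (simp add: val_def m_assoc[symmetric])
  have ztop: "z \<in> topspace (bernoulli_space G)"
    unfolding bernoulli_space_def by (simp add: z_def PiE_iff)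
  have dense: "topspace (bernoulli_space G) \<subseteq> (bernoulli_space G) closure_of (orbit G z)"
  proof
    fix x0 assume x0: "x0 \<in> topspace (bernoulli_space G)"
    have "\<forall>T. x0 \<in> T \<and> openin (bernoulli_space G) T \<longrightarrow> (\<exists>y. y \<in> orbit G z \<and> y \<in> T)"
    proof (intro allI impI)
      fix T assume T: "x0 \<in> T \<and> openin (bernoulli_space G) T"
      then obtain V where V: "finite {i \<in> ?C. V i \<noteq> UNIV}" "x0 \<in> PiE ?C V" "PiE ?C V \<subseteq> T"
        unfolding bernoulli_space_def openin_product_topology_alt topspace_discrete_topology by force
      define F where "F = {i \<in> ?C. V i \<noteq> UNIV}"
      have "finite F" using V(1) unfolding F_def .
      then obtain ls where ls: "set ls = F" using finite_list by auto
      define l where "l = map (\<lambda>h. (h, x0 h)) ls"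
      have "F \<subseteq> ?C" unfolding F_def by blast
      then have "set l \<subseteq> ?C \<times> UNIV" unfolding l_def using ls by auto
      then have "(l, True) \<in> I" unfolding I_def by (simp add: lists_eq_set)
      then obtain c where c: "c \<in> ?C" "\<sigma> c = (l, True)" using \<sigma> by (metis imageE)
      let ?g = "A c"
      have g: "?g \<in> ?C" using Aspec c by blast
      have "bernoulli_shift G ?g z \<in> PiE ?C V"
      proof -
        have "bernoulli_shift G ?g z h \<in> V h" if h: "h \<in> ?C" for h
        proof (cases "h \<in> F")
          case True
          have w: "h \<otimes> ?g \<in> Pl G (\<sigma> c) ?g" unfolding Pl_def c l_def using True ls by force
          have "bernoulli_shift G ?g z h = z (h \<otimes> ?g)" using h by (simp add: bernoulli_shift_def)
          also have "\<dots> = val G (\<sigma> c) ?g (h \<otimes> ?g)" using zval[OF c(1) w] h g by simp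
          also have "\<dots> = the (map_of l h)" using placeR[OF _ g h, of "(l,True)"] c by simp
          also have "\<dots> = x0 h" unfolding l_def map_of_map_restrict using True ls by simp
          finally show ?thesis using V(2) h by auto
        next
          case False then have "V h = UNIV" using h F_def by auto
          then show ?thesis by simp
        qed
        then show ?thesis by (auto simp: bernoulli_shift_def PiE_iff)
      qed
      moreover have "bernoulli_shift G ?g z \<in> orbit G z" unfolding orbit_def using g by blast
      ultimately show "\<exists>y. y \<in> orbit G z \<and> y \<in> T" using V(3) by blast
    qed
    then show "x0 \<in> (bernoulli_space G) closure_of (orbit G z)"
      unfolding in_closure_of using x0 by blast
  qed
  have free: "free_point G z"
    unfolding free_point_def
  proof (rule inj_onI)
    fix g g' assume g: "g \<in> ?C" "g' \<in> ?C" and eq: "bernoulli_shift G g z = bernoulli_shift G g' z"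
    show "g = g'"
    proof (rule ccontr)
      assume ne: "g \<noteq> g'"
      define a where "a = inv g \<otimes> g'"
      have aC: "a \<in> ?C" using g by (simp add: a_def)
      have a1: "a \<noteq> \<one>"
      proof
        assume "a = \<one>"
        then have "g \<otimes> a = g" using g by simp
        moreover have "g \<otimes> a = g'" using g by (simp add: a_def m_assoc[symmetric])
        ultimately show False using ne by simp
      qed
      define l where "l = [(\<one>, False), (a, True)]"
      have "set l \<subseteq> ?C \<times> UNIV" unfolding l_def using aC by auto
      then have "(l, False) \<in> I" unfolding I_def by (simp add: lists_eq_set)
      then obtain c where c: "c \<in> ?C" "\<sigma> c = (l, False)" using \<sigma> by (metis imageE)
      let ?k = "A c"
      have k: "?k \<in> ?C" using Aspec c by blast
      have w1: "?k \<otimes> \<one> \<in> Pl G (\<sigma> c) ?k" unfolding Pl_def c l_def by force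
      have w2: "?k \<otimes> a \<in> Pl G (\<sigma> c) ?k" unfolding Pl_def c l_def by force
      have z1: "z (?k \<otimes> \<one>) = False"
        using zval[OF c(1) w1] placeL[OF _ k one_closed, of "(l,False)"] c k by (simp add: l_def)
      have z2: "z (?k \<otimes> a) = True"
        using zval[OF c(1) w2] placeL[OF _ k aC, of "(l,False)"] c k aC a1 by (simp add: l_def)
      let ?h = "?k \<otimes> inv g"
      have hC: "?h \<in> ?C" using k g by simp
      have "bernoulli_shift G g z ?h = bernoulli_shift G g' z ?h" using eq by simp
      then have "z (?h \<otimes> g) = z (?h \<otimes> g')" using hC by (simp add: bernoulli_shift_def)
      moreover have "?h \<otimes> g = ?k \<otimes> \<one>" using k g by (simp add: m_assoc)
      moreover have "?h \<otimes> g' = ?k \<otimes> a" using k g by (simp add: m_assoc a_def)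
      ultimately show False using z1 z2 by simp
    qed
  qed
  show ?thesis
    using ztop free dense closure_of_subset_topspace[of "bernoulli_space G" "orbit G z"] by blast
qed

theorem lemma2p3:
  fixes G :: "('g, 'b) monoid_scheme"
  assumes "group G" and "infinite (carrier G)"
  shows "\<exists>z \<in> topspace (bernoulli_space G).
           free_point G z \<and>
           (bernoulli_space G) closure_of (orbit G z) = topspace (bernoulli_space G)"
  using group.main[OF assms(1) assms] .

end
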